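(* Let $\kappa\geqslant12$ be even, $a(n)$ the Fourier coefficients of a holomorphic cusp form of weight $\kappa$ for $SL_2(\mathbb{Z})$, let $T\geqslant10$ and $y=T^{3/4}$. For positive integers $n,m,k,\ell$ set $g(n,m,k,\ell)=\dfrac{a(n)a(m)a(k)a(\ell)}{(nmk\ell)^{\kappa/2+1/4}}$ if $n,m,k,\ell\leqslant y$ and $g(n,m,k,\ell)=0$ otherwise. Define \[ S_4(x)=\frac18\sum_{n,m,k,\ell\leqslant y} g(n,m,k,\ell)\,x^{2\kappa-1}\cos\big(4\pi(\sqrt n+\sqrt m+\sqrt k+\sqrt\ell)\sqrt x-\pi\big). \] Then for every $\varepsilon>0$, \[ \int_T^{2T}S_4(x)\,\mathrm{d}x\ll T^{2\kappa-1/2+\varepsilon}y^{1/2}= T^{2\kappa-1/8+\varepsilon}, \] with the implied constant depending on $\varepsilon$ and the cusp form.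
   Context: Sums are over positive integers $n,m,k,\ell$. The coefficients $a(n)$ are real and satisfy Deligne's bound $a(n)\ll n^{(\kappa-1)/2}d(n)$, where $d(n)$ is the number of divisors of $n$. *)

theory Defs
  imports "HOL-Analysis.Analysis"
begin

definition qexp :: "(nat \<Rightarrow> real) \<Rightarrow> complex \<Rightarrow> complex" where
  "qexp a z = (\<Sum>n. complex_of_real (a (Suc n)) * exp (2 * pi * \<i> * of_nat (Suc n) * z))"

text \<open>a(n), n >= 1, are the Fourier coefficients of a holomorphic cusp form of weight kappa
  for SL_2(Z): the series converges on the upper half plane (hence defines a holomorphic,
  1-periodic function vanishing at the cusp, as there is no constant term) and the function
  satisfies F(-1/z) = z^kappa F(z).\<close>
definition is_cusp_form_coeffs :: "nat \<Rightarrow> (nat \<Rightarrow> real) \<Rightarrow> bool" where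
  "is_cusp_form_coeffs \<kappa> a \<longleftrightarrow>
     (\<forall>z. Im z > 0 \<longrightarrow>
        summable (\<lambda>n. complex_of_real (a (Suc n)) * exp (2 * pi * \<i> * of_nat (Suc n) * z))) \<and>
     (\<forall>z. Im z > 0 \<longrightarrow> qexp a (- 1 / z) = z ^ \<kappa> * qexp a z)"

definition divisor_count :: "nat \<Rightarrow> nat" where
  "divisor_count n = card {d. d dvd n}"

definition g4 :: "nat \<Rightarrow> (nat \<Rightarrow> real) \<Rightarrow> real \<Rightarrow> nat \<Rightarrow> nat \<Rightarrow> nat \<Rightarrow> nat \<Rightarrow> real" where
  "g4 \<kappa> a y n m k l =
     (if real n \<le> y \<and> real m \<le> y \<and> real k \<le> y \<and> real l \<le> y
      then a n * a m * a k * a l / (real (n * m * k * l)) powr (real \<kappa> / 2 + 1 / 4)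
      else 0)"

definition S4 :: "nat \<Rightarrow> (nat \<Rightarrow> real) \<Rightarrow> real \<Rightarrow> real \<Rightarrow> real" where
  "S4 \<kappa> a T x =
     (let y = T powr (3 / 4) in
      (1 / 8) * (\<Sum>n\<in>{1..nat \<lfloor>y\<rfloor>}. \<Sum>m\<in>{1..nat \<lfloor>y\<rfloor>}. \<Sum>k\<in>{1..nat \<lfloor>y\<rfloor>}. \<Sum>l\<in>{1..nat \<lfloor>y\<rfloor>}.
         g4 \<kappa> a y n m k l * x ^ (2 * \<kappa> - 1) *
         cos (4 * pi * (sqrt (real n) + sqrt (real m) + sqrt (real k) + sqrt (real l)) * sqrt x - pi)))"

end

theory Submission
  imports Defs "HOL-Analysis.Analysis"
begin


lemma osc_deriv:
  fixes p::nat and c x :: real assumes "x>0" "c>0"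
  shows "((\<lambda>x. (2/c) * (x^p * sqrt x) * sin (c * sqrt x - pi)) has_real_derivative
     (x^p * cos (c * sqrt x - pi) + (2/c) * (real p * x^(p-1) * sqrt x + x^p/(2 * sqrt x)) * sin (c * sqrt x - pi))) (at x)"
proof -
  have sx: "sqrt x > 0" using assms by simp
  have iv: "inverse (sqrt x) = 1 / sqrt x" by (simp add: inverse_eq_divide)
  show ?thesis
    using assms
    apply (auto intro!: derivative_eq_intros)
    unfolding iv using sx by (simp add: field_simps)
qed

lemma osc_bound:
  fixes p::nat and c T :: real assumes "p \<ge> 1" "c>0" "T>0"
  shows "\<bar>integral {T..2*T} (\<lambda>x. x^p * cos (c * sqrt x - pi))\<bar> \<le> 2^(p+3) * (real p+2) * T^p * sqrt T / c"
proof -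
  define F where "F x = (2/c) * (x^p * sqrt x) * sin (c * sqrt x - pi)" for x
  define h where "h x = (2/c) * (real p * x^(p-1) * sqrt x + x^p/(2 * sqrt x)) * sin (c * sqrt x - pi)" for x
  define g where "g x = x^p * cos (c * sqrt x - pi)" for x
  have "((\<lambda>x. g x + h x) has_integral (F (2*T) - F T)) {T..2*T}"
  proof (rule fundamental_theorem_of_calculus)
    show "T \<le> 2*T" using assms by simp
    fix x assume "x \<in> {T..2*T}"
    then have "x > 0" using assms by simp
    from osc_deriv[OF this assms(2), of p] show "(F has_vector_derivative g x + h x) (at x within {T..2 * T})"
      unfolding F_def g_def h_def
      by (simp add: has_real_derivative_iff_has_vector_derivative[symmetric] has_field_derivative_at_within)
  qed
  moreover have ch: "continuous_on {T..2*T} h" unfolding h_def using assms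
    by (auto intro!: continuous_intros)
  have cg: "continuous_on {T..2*T} g" unfolding g_def using assms
    by (auto intro!: continuous_intros)
  have ih: "(h has_integral integral {T..2*T} h) {T..2*T}"
    using ch integrable_continuous_interval by blast
  have ig: "(g has_integral integral {T..2*T} g) {T..2*T}"
    using cg integrable_continuous_interval by blast
  have "((\<lambda>x. g x + h x) has_integral (integral {T..2*T} g + integral {T..2*T} h)) {T..2*T}"
    using has_integral_add[OF ig ih] by simp
  ultimately have "F (2*T) - F T = integral {T..2*T} g + integral {T..2*T} h"
    by (rule has_integral_unique)
  then have eq: "integral {T..2*T} g = (F (2*T) - F T) - integral {T..2*T} h"
    by simp
  have sT: "sqrt T > 0" using assms by simp
  have s2: "sqrt (2*T) \<le> 2 * sqrt T" using assms
    by (simp add: real_sqrt_mult) (smt (verit) real_sqrt_le_iff real_sqrt_four real_sqrt_mult)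
  have Fb: "\<bar>F x\<bar> \<le> (2/c) * (2^p * T^p * (2 * sqrt T))" if "x \<in> {T..2*T}" for x
  proof -
    have x0: "x \<ge> 0" "x \<le> 2*T" using that assms by auto
    have "\<bar>F x\<bar> = (2/c) * (x^p * sqrt x) * \<bar>sin (c * sqrt x - pi)\<bar>"
      unfolding F_def using assms x0 by (simp add: abs_mult)
    also have "\<dots> \<le> (2/c) * (x^p * sqrt x)"
      using assms x0 abs_sin_le_one by (intro mult_right_le_one_le) auto
    also have "\<dots> \<le> (2/c) * ((2*T)^p * (2 * sqrt T))"
      using assms x0 s2
      by (intro mult_left_mono mult_mono power_mono) (auto intro: order.trans[OF real_sqrt_le_mono])
    finally show ?thesis by (simp add: power_mult_distrib)
  qed
  have hb: "norm (h x) \<le> (2/c) * ((real p + 1) * (2^p * T^p) / sqrt T)" if "x \<in> {T..2*T}" for x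
  proof -
    have x0: "x \<ge> T" "x \<le> 2*T" using that assms by auto
    have xp: "x > 0" using x0 assms by simp
    have sx: "sqrt x \<ge> sqrt T" using x0 by simp
    have e1: "real p * x^(p-1) * sqrt x = real p * x^p / sqrt x"
      using xp assms(1) by (simp add: field_simps power_eq_if)
    have xpb: "x^p \<le> 2^p * T^p" using x0 xp by (metis power_mono power_mult_distrib less_imp_le)
    have q: "x^p / sqrt x \<le> 2^p * T^p / sqrt T"
      using xpb sx sT xp by (intro frac_le) auto
    have "norm (h x) = (2/c) * (real p * x^(p-1) * sqrt x + x^p/(2 * sqrt x)) * \<bar>sin (c * sqrt x - pi)\<bar>"
      unfolding h_def using assms xp by (simp add: abs_mult)
    also have "\<dots> \<le> (2/c) * (real p * x^(p-1) * sqrt x + x^p/(2 * sqrt x))"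
      using assms xp abs_sin_le_one by (intro mult_right_le_one_le) auto
    also have "\<dots> = (2/c) * ((real p + 1/2) * (x^p / sqrt x))"
      using e1 xp assms by (simp add: field_simps)
    also have "\<dots> \<le> (2/c) * ((real p + 1) * (2^p * T^p / sqrt T))"
      using q assms xp by (intro mult_left_mono mult_mono) auto
    finally show ?thesis by simp
  qed
  have B0: "0 \<le> (2/c) * ((real p + 1) * (2^p * T^p) / sqrt T)" using assms by simp
  have hi: "norm (integral {T..2*T} h) \<le> (2/c) * ((real p + 1) * (2^p * T^p) / sqrt T) * T"
    using has_integral_bound[OF B0 ih[unfolded cbox_interval[symmetric]]] hb assms
    by (simp add: cbox_interval)
  have TT: "T / sqrt T = sqrt T" using assms by (simp add: field_simps)
  have hi': "norm (integral {T..2*T} h) \<le> (2/c) * ((real p + 1) * (2^p * T^p)) * sqrt T"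
  proof -
    have "(2/c) * ((real p + 1) * (2^p * T^p) / sqrt T) * T = (2/c) * ((real p + 1) * (2^p * T^p)) * (T / sqrt T)"
      by simp
    then show ?thesis using hi TT by simp
  qed
  have "\<bar>integral {T..2*T} g\<bar> \<le> \<bar>F (2*T)\<bar> + \<bar>F T\<bar> + norm (integral {T..2*T} h)"
    using eq by simp
  also have "\<dots> \<le> (2/c) * (2^p * T^p * (2 * sqrt T)) + (2/c) * (2^p * T^p * (2 * sqrt T))
     + (2/c) * ((real p + 1) * (2^p * T^p)) * sqrt T"
    using Fb[of "2*T"] Fb[of T] hi' assms by (intro add_mono) auto
  also have "\<dots> = (2/c) * 2^p * T^p * sqrt T * (real p + 5)"
    using TT assms by (simp add: field_simps)
  also have "\<dots> = (2^p*T^p * sqrt T/c) * (2*(real p + 5))" by (simp add: field_simps)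
  also have "\<dots> \<le> (2^p*T^p * sqrt T/c) * (8*(real p + 2))"
    using assms sT by (intro mult_left_mono) auto
  also have "\<dots> = 2^(p+3) * (real p+2) * T^p * sqrt T / c" by (simp add: field_simps power_add)
  finally show ?thesis unfolding g_def .
qed



lemma pow8_diff: fixes a b :: real assumes "0 \<le> a" "a \<le> b"
  shows "b^8 - a^8 \<le> 8 * b^7 * (b - a)"
proof -
  have "b^8 - a^8 = (b - a) * (\<Sum>p<8. b^p * a^(7-p))"
    using diff_power_eq_sum[of b 7 a] by simp
  also have "\<dots> \<le> (b - a) * (\<Sum>p<(8::nat). b^p * b^(7-p))"
    using assms by (intro mult_left_mono sum_mono mult_left_mono power_mono) auto
  also have "(\<Sum>p<(8::nat). b^p * b^(7-p)) = (\<Sum>p<(8::nat). b^7)"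
    by (intro sum.cong refl) (simp add: power_add[symmetric])
  finally show ?thesis by (simp add: mult_ac)
qed

lemma sum_powr_78: "(\<Sum>e\<in>{1..M}. real e powr (-7/8)) \<le> 8 * real M powr (1/8)"
proof (induction M)
  case 0 then show ?case by simp
next
  case (Suc M)
  define a where "a = real M powr (1/8)"
  define b where "b = real (Suc M) powr (1/8)"
  have a0: "0 \<le> a" unfolding a_def by simp
  have ab: "a \<le> b" unfolding a_def b_def by (intro powr_mono2) auto
  have b0: "b > 0" unfolding b_def by simp
  have a8: "a^8 = real M" unfolding a_def
    by (cases "M = 0") (simp_all add: powr_power)
  have b8: "b^8 = real (Suc M)" unfolding b_def
    by (subst powr_power) (simp_all del: of_nat_Suc)
  have e: "real (Suc M) powr (-7/8) = 1 / b^7" unfolding b_def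
    by (subst powr_power) (simp_all add: powr_minus_divide del: of_nat_Suc)
  have "1 \<le> 8 * b^7 * (b - a)" using pow8_diff[OF a0 ab] a8 b8 by simp
  then have "1 / b^7 \<le> 8 * (b - a)" using b0 by (simp add: field_simps)
  then show ?case using Suc e unfolding a_def b_def by simp
qed

lemma harm_bound: "N \<ge> 1 \<Longrightarrow> (\<Sum>d\<in>{1..N}. 1 / real d) \<le> 1 + ln (real N)"
proof (induction N rule: dec_induct)
  case base then show ?case by simp
next
  case (step N)
  have N0: "real N > 0" using step by simp
  have "ln (real N / real (Suc N)) \<le> real N / real (Suc N) - 1"
    using N0 by (intro ln_le_minus_one) auto
  also have "\<dots> = - 1 / real (Suc N)" by (simp add: field_simps)
  finally have "1 / real (Suc N) \<le> ln (real (Suc N)) - ln (real N)"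
    using N0 by (simp add: ln_div del: of_nat_Suc)
  then show ?case using step by simp
qed



lemma divisor_count_eq: "1 \<le> n \<Longrightarrow> n \<le> N \<Longrightarrow> divisor_count n = card {d\<in>{1..N}. d dvd n}"
  unfolding divisor_count_def
proof -
  assume n: "1 \<le> n" "n \<le> N"
  have "{d. d dvd n} = {d\<in>{1..N}. d dvd n}"
    using n by (auto dest: dvd_imp_le intro: Suc_leI)
  then show "card {d. d dvd n} = card {d\<in>{1..N}. d dvd n}" by simp
qed

lemma inner_sum: assumes "d \<ge> 1"
  shows "(\<Sum>n\<in>{n\<in>{1..N}. d dvd n}. real n powr (-7/8)) = real d powr (-7/8) * (\<Sum>e\<in>{1..N div d}. real e powr (-7/8))"
proof -
  have img: "(\<lambda>e. d * e) ` {1..N div d} = {n\<in>{1..N}. d dvd n}"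
  proof
    show "(\<lambda>e. d * e) ` {1..N div d} \<subseteq> {n\<in>{1..N}. d dvd n}"
      using assms by (auto simp: less_eq_div_iff_mult_less_eq mult.commute)
    show "{n\<in>{1..N}. d dvd n} \<subseteq> (\<lambda>e. d * e) ` {1..N div d}"
    proof
      fix n assume "n \<in> {n\<in>{1..N}. d dvd n}"
      then obtain e where e: "n = d * e" "1 \<le> n" "n \<le> N" by auto
      have "1 \<le> e" using e by (cases e) auto
      moreover have "e \<le> N div d" using e assms by (simp add: less_eq_div_iff_mult_less_eq mult.commute)
      ultimately show "n \<in> (\<lambda>e. d * e) ` {1..N div d}" using e by auto
    qed
  qed
  have inj: "inj_on (\<lambda>e. d * e) {1..N div d}" using assms by (auto simp: inj_on_def)
  have "(\<Sum>n\<in>{n\<in>{1..N}. d dvd n}. real n powr (-7/8)) = (\<Sum>e\<in>{1..N div d}. real (d * e) powr (-7/8))"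
    unfolding img[symmetric] sum.reindex[OF inj] by (simp add: o_def)
  also have "\<dots> = (\<Sum>e\<in>{1..N div d}. real d powr (-7/8) * real e powr (-7/8))"
    by (simp add: powr_mult)
  finally show ?thesis by (simp add: sum_distrib_left)
qed

lemma divisor_sum_bound: assumes "N \<ge> 1"
  shows "(\<Sum>n\<in>{1..N}. real (divisor_count n) * real n powr (-7/8)) \<le> 8 * real N powr (1/8) * (1 + ln (real N))"
proof -
  have "(\<Sum>n\<in>{1..N}. real (divisor_count n) * real n powr (-7/8))
      = (\<Sum>n\<in>{1..N}. \<Sum>d\<in>{d\<in>{1..N}. d dvd n}. real n powr (-7/8))"
  proof (intro sum.cong refl)
    fix n assume "n \<in> {1..N}"
    then show "real (divisor_count n) * real n powr (-7/8) = (\<Sum>d\<in>{d\<in>{1..N}. d dvd n}. real n powr (-7/8))"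
      using divisor_count_eq[of n N] by simp
  qed
  also have "\<dots> = (\<Sum>d\<in>{1..N}. \<Sum>n\<in>{n\<in>{1..N}. d dvd n}. real n powr (-7/8))"
    by (rule sum.swap_restrict) auto
  also have "\<dots> = (\<Sum>d\<in>{1..N}. real d powr (-7/8) * (\<Sum>e\<in>{1..N div d}. real e powr (-7/8)))"
    by (intro sum.cong refl inner_sum) auto
  also have "\<dots> \<le> (\<Sum>d\<in>{1..N}. 8 * real N powr (1/8) * (1 / real d))"
  proof (intro sum_mono)
    fix d assume d: "d \<in> {1..N}"
    have d0: "real d > 0" using d by simp
    have "real d powr (-7/8) * (\<Sum>e\<in>{1..N div d}. real e powr (-7/8)) \<le> real d powr (-7/8) * (8 * real (N div d) powr (1/8))"
      by (intro mult_left_mono sum_powr_78) auto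
    also have "\<dots> \<le> real d powr (-7/8) * (8 * (real N / real d) powr (1/8))"
    proof (intro mult_left_mono powr_mono2)
      have "N div d * d \<le> N" by (rule div_times_less_eq_dividend)
      then have "real (N div d) * real d \<le> real N" by (metis of_nat_le_iff of_nat_mult)
      then show "real (N div d) \<le> real N / real d" using d0 by (simp add: pos_le_divide_eq)
    qed auto
    also have "\<dots> = 8 * real N powr (1/8) * (real d powr (-7/8) / real d powr (1/8))"
      by (simp add: powr_divide)
    also have "real d powr (-7/8) / real d powr (1/8) = 1 / real d"
      using d0 by (simp add: powr_minus_divide powr_add[symmetric])
    finally show "real d powr (-7/8) * (\<Sum>e\<in>{1..N div d}. real e powr (-7/8)) \<le> 8 * real N powr (1/8) * (1 / real d)" .
  qed
  also have "\<dots> = 8 * real N powr (1/8) * (\<Sum>d\<in>{1..N}. 1 / real d)"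
    by (simp add: sum_distrib_left)
  also have "\<dots> \<le> 8 * real N powr (1/8) * (1 + ln (real N))"
    by (intro mult_left_mono harm_bound assms) auto
  finally show ?thesis .
qed



lemma term_int:
  fixes g c T :: real and p :: nat
  shows "((\<lambda>x. g * x^p * cos (c * sqrt x - pi)) has_integral g * integral {T..2*T} (\<lambda>x. x^p * cos (c * sqrt x - pi))) {T..2*T}"
proof -
  have "continuous_on {T..2*T} (\<lambda>x. x^p * cos (c * sqrt x - pi))"
    by (intro continuous_intros)
  then have "((\<lambda>x. x^p * cos (c * sqrt x - pi)) has_integral integral {T..2*T} (\<lambda>x. x^p * cos (c * sqrt x - pi))) {T..2*T}"
    using integrable_continuous_interval by blast
  from has_integral_mult_right[OF this, of g] show ?thesis by (simp add: mult.assoc)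
qed

lemma prod_root8_le:
  fixes a b c d :: real assumes "0 \<le> a" "0 \<le> b" "0 \<le> c" "0 \<le> d"
  shows "a powr (1/8) * b powr (1/8) * c powr (1/8) * d powr (1/8) \<le> sqrt a + sqrt b + sqrt c + sqrt d"
proof -
  define S where "S = sqrt a + sqrt b + sqrt c + sqrt d"
  have S0: "0 \<le> S" unfolding S_def using assms by simp
  have "sqrt a \<le> S" "sqrt b \<le> S" "sqrt c \<le> S" "sqrt d \<le> S" unfolding S_def using assms by auto
  then have P: "sqrt a * sqrt b * sqrt c * sqrt d \<le> S * S * S * S"
    using assms S0 by (intro mult_mono) auto
  have e: "a powr (1/8) * b powr (1/8) * c powr (1/8) * d powr (1/8) = (sqrt a * sqrt b * sqrt c * sqrt d) powr (1/4)"
    using assms by (simp add: powr_mult powr_half_sqrt[symmetric] powr_powr)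
  also have "\<dots> \<le> (S * S * S * S) powr (1/4)"
    using P assms by (intro powr_mono2) auto
  also have "(S * S * S * S) powr (1/4) = S"
  proof (cases "S = 0")
    case False
    then have Sp: "S > 0" using S0 by simp
    have eq: "S * S * S * S = S powr (real 4)" using powr_realpow[OF Sp, of 4] by (simp add: eval_nat_numeral)
    show ?thesis unfolding eq powr_powr using Sp by simp
  qed simp
  finally show ?thesis unfolding S_def .
qed

lemma ln_bound: fixes T e :: real assumes "T \<ge> 1" "e > 0"
  shows "1 + ln T \<le> (1 + 4/e) * T powr (e/4)"
proof -
  have T0: "T > 0" using assms by simp
  have u1: "T powr (e/4) \<ge> 1" using assms by (simp add: ge_one_powr_ge_zero)
  have "ln (T powr (e/4)) \<le> T powr (e/4) - 1" using T0 by (intro ln_le_minus_one) simp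
  then have "(e/4) * ln T \<le> T powr (e/4)" using T0 by (simp add: ln_powr)
  then have "ln T \<le> (4/e) * T powr (e/4)" using assms by (simp add: field_simps)
  then show ?thesis using u1 by (simp add: algebra_simps)
qed

lemma abs_sum4_le:
  fixes f B :: "nat \<Rightarrow> nat \<Rightarrow> nat \<Rightarrow> nat \<Rightarrow> real"
  assumes "\<And>n m k l. n \<in> A \<Longrightarrow> m \<in> A \<Longrightarrow> k \<in> A \<Longrightarrow> l \<in> A \<Longrightarrow> \<bar>f n m k l\<bar> \<le> B n m k l"
  shows "\<bar>\<Sum>n\<in>A. \<Sum>m\<in>A. \<Sum>k\<in>A. \<Sum>l\<in>A. f n m k l\<bar> \<le> (\<Sum>n\<in>A. \<Sum>m\<in>A. \<Sum>k\<in>A. \<Sum>l\<in>A. B n m k l)"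
  apply (rule order.trans[OF sum_abs], rule sum_mono)
  apply (rule order.trans[OF sum_abs], rule sum_mono)
  apply (rule order.trans[OF sum_abs], rule sum_mono)
  apply (rule order.trans[OF sum_abs], rule sum_mono)
  using assms by blast

lemma sum4_prod:
  fixes w :: "nat \<Rightarrow> real"
  shows "(\<Sum>n\<in>A. \<Sum>m\<in>A. \<Sum>k\<in>A. \<Sum>l\<in>A. K * (w n * w m * w k * w l)) = K * (sum w A)^4"
  by (simp add: eval_nat_numeral sum_distrib_left sum_distrib_right mult_ac)



theorem mainTheorem5:
  fixes \<kappa> :: nat and a :: "nat \<Rightarrow> real"
  assumes "even \<kappa>" and "\<kappa> \<ge> 12"
    and "is_cusp_form_coeffs \<kappa> a"
    and "\<exists>C. \<forall>n\<ge>1. \<bar>a n\<bar> \<le> C * real n powr ((real \<kappa> - 1) / 2) * real (divisor_count n)"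
  shows "\<forall>\<epsilon>>0. \<exists>C. \<forall>T\<ge>10.
           \<bar>integral {T..2 * T} (S4 \<kappa> a T)\<bar>
             \<le> C * T powr (2 * real \<kappa> - 1 / 2 + \<epsilon>) * (T powr (3 / 4)) powr (1 / 2)"
proof (intro allI impI)
  fix \<epsilon> :: real assume \<epsilon>: "\<epsilon> > 0"
  obtain C0 where C0: "\<forall>n\<ge>1. \<bar>a n\<bar> \<le> C0 * real n powr ((real \<kappa> - 1) / 2) * real (divisor_count n)"
    using assms(4) by blast
  define C1 where "C1 = \<bar>C0\<bar>"
  define p where "p = 2 * \<kappa> - 1"
  have p1: "p \<ge> 1" and rp: "real p = 2 * real \<kappa> - 1" unfolding p_def using assms(2) by auto
  define K where "K = 2^(p+3) * (real p + 2)"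
  have K0: "K \<ge> 0" unfolding K_def by simp
  define w where "w n = real (divisor_count n) * real n powr (-7/8)" for n
  define q where "q n = a n / real n powr (real \<kappa> / 2 + 1/4)" for n
  define Cf where "Cf = K * C1^4 / (32*pi) * 8^4 * (1 + 4/\<epsilon>)^4"
  have C1b: "\<bar>a n\<bar> \<le> C1 * real n powr ((real \<kappa> - 1) / 2) * real (divisor_count n)" if "n \<ge> 1" for n
  proof -
    have "C0 * real n powr ((real \<kappa> - 1) / 2) * real (divisor_count n) \<le> C1 * real n powr ((real \<kappa> - 1) / 2) * real (divisor_count n)"
      by (rule mult_right_mono[OF mult_right_mono[OF _ powr_ge_zero] of_nat_0_le_iff]) (simp add: C1_def)
    then show ?thesis using C0 that by (meson order.trans)
  qed
  have qb: "\<bar>q n\<bar> / real n powr (1/8) \<le> C1 * w n" if "n \<ge> 1" for n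
  proof -
    have n0: "real n > 0" using that by simp
    have "\<bar>q n\<bar> / real n powr (1/8) = \<bar>a n\<bar> / (real n powr (real \<kappa> / 2 + 1/4) * real n powr (1/8))"
      unfolding q_def by (simp add: abs_divide)
    also have "\<dots> \<le> C1 * real n powr ((real \<kappa> - 1) / 2) * real (divisor_count n) / (real n powr (real \<kappa> / 2 + 1/4) * real n powr (1/8))"
      using C1b[OF that] n0 by (intro divide_right_mono) auto
    also have "\<dots> = C1 * real (divisor_count n) * (real n powr ((real \<kappa> - 1) / 2) / (real n powr (real \<kappa> / 2 + 1/4) * real n powr (1/8)))"
      by simp
    also have "real n powr ((real \<kappa> - 1) / 2) / (real n powr (real \<kappa> / 2 + 1/4) * real n powr (1/8)) = real n powr (-7/8)"
      using n0 by (simp add: powr_add[symmetric] powr_diff[symmetric] field_simps)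
    finally show ?thesis unfolding w_def by (simp add: mult_ac)
  qed
  have w0: "w n \<ge> 0" for n unfolding w_def by simp
  show "\<exists>C. \<forall>T\<ge>10. \<bar>integral {T..2 * T} (S4 \<kappa> a T)\<bar>
             \<le> C * T powr (2 * real \<kappa> - 1 / 2 + \<epsilon>) * (T powr (3 / 4)) powr (1 / 2)"
  proof (intro exI allI impI)
    fix T :: real assume T: "T \<ge> 10"
    have T0: "T > 0" using T by simp
    define y where "y = T powr (3/4)"
    define N where "N = nat \<lfloor>y\<rfloor>"
    have y1: "y \<ge> 1" unfolding y_def using T by (simp add: ge_one_powr_ge_zero)
    have yT: "y \<le> T" unfolding y_def using powr_mono[of "3/4" 1 T] T by simp
    have N1: "N \<ge> 1" unfolding N_def using y1 by (simp add: le_nat_iff)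
    have Ny: "real N \<le> y" unfolding N_def using y1 of_nat_floor by simp
    define c where "c n m k l = 4 * pi * (sqrt (real n) + sqrt (real m) + sqrt (real k) + sqrt (real l))" for n m k l :: nat
    define J where "J n m k l = integral {T..2*T} (\<lambda>x. x^p * cos (c n m k l * sqrt x - pi))" for n m k l
    have "(S4 \<kappa> a T has_integral (1/8) * (\<Sum>n\<in>{1..N}. \<Sum>m\<in>{1..N}. \<Sum>k\<in>{1..N}. \<Sum>l\<in>{1..N}. g4 \<kappa> a y n m k l * J n m k l)) {T..2*T}"
      unfolding S4_def Let_def y_def[symmetric] N_def[symmetric] J_def c_def p_def[symmetric]
      by (intro has_integral_mult_right has_integral_sum finite_atLeastAtMost ballI term_int)
    then have ieq: "integral {T..2*T} (S4 \<kappa> a T) = (1/8) * (\<Sum>n\<in>{1..N}. \<Sum>m\<in>{1..N}. \<Sum>k\<in>{1..N}. \<Sum>l\<in>{1..N}. g4 \<kappa> a y n m k l * J n m k l)"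
      by (rule integral_unique)
    define A where "A = K * T^p * sqrt T / (4*pi) * C1^4"
    have tb: "\<bar>g4 \<kappa> a y n m k l * J n m k l\<bar> \<le> A * (w n * w m * w k * w l)"
      if "n \<in> {1..N}" "m \<in> {1..N}" "k \<in> {1..N}" "l \<in> {1..N}" for n m k l
    proof -
      have nn: "1 \<le> n" "1 \<le> m" "1 \<le> k" "1 \<le> l" using that by auto
      have "real n \<le> y" "real m \<le> y" "real k \<le> y" "real l \<le> y"
        using that Ny by (auto intro: order.trans[of _ "real N"])
      then have geq: "g4 \<kappa> a y n m k l = q n * q m * q k * q l"
        unfolding g4_def q_def by (simp add: powr_mult)
      define P where "P = real n powr (1/8) * real m powr (1/8) * real k powr (1/8) * real l powr (1/8)"
      have P0: "P > 0" unfolding P_def using nn by simp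
      have Ps: "P \<le> sqrt (real n) + sqrt (real m) + sqrt (real k) + sqrt (real l)"
        unfolding P_def by (rule prod_root8_le) auto
      have c0: "c n m k l > 0" unfolding c_def using P0 Ps by simp
      have Jb: "\<bar>J n m k l\<bar> \<le> K * T^p * sqrt T / c n m k l"
        unfolding J_def K_def using osc_bound[OF p1 c0 T0] by simp
      have cP: "c n m k l \<ge> 4 * pi * P" unfolding c_def using Ps by simp
      define Q where "Q = \<bar>q n * q m * q k * q l\<bar>"
      have Q0: "Q \<ge> 0" unfolding Q_def by simp
      have L0: "K * T^p * sqrt T \<ge> 0" using K0 T0 by simp
      have "\<bar>g4 \<kappa> a y n m k l * J n m k l\<bar> = Q * \<bar>J n m k l\<bar>" unfolding geq Q_def by (simp add: abs_mult)
      also have "\<dots> \<le> Q * (K * T^p * sqrt T / c n m k l)" using Jb Q0 by (intro mult_left_mono)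
      also have "\<dots> \<le> Q * (K * T^p * sqrt T / (4 * pi * P))"
        using cP P0 L0 Q0 c0 by (intro mult_left_mono divide_left_mono) auto
      also have "\<dots> = K * T^p * sqrt T / (4*pi) * ((\<bar>q n\<bar> / real n powr (1/8)) * (\<bar>q m\<bar> / real m powr (1/8))
           * (\<bar>q k\<bar> / real k powr (1/8)) * (\<bar>q l\<bar> / real l powr (1/8)))"
        unfolding Q_def P_def by (simp add: abs_mult)
      also have "\<dots> \<le> K * T^p * sqrt T / (4*pi) * ((C1 * w n) * (C1 * w m) * (C1 * w k) * (C1 * w l))"
        using qb nn L0 by (intro mult_left_mono mult_mono) (auto simp: C1_def w0)
      also have "\<dots> = A * (w n * w m * w k * w l)" unfolding A_def by (simp add: eval_nat_numeral mult_ac)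
      finally show ?thesis .
    qed
    have "\<bar>integral {T..2*T} (S4 \<kappa> a T)\<bar> \<le> (1/8) * (\<Sum>n\<in>{1..N}. \<Sum>m\<in>{1..N}. \<Sum>k\<in>{1..N}. \<Sum>l\<in>{1..N}. A * (w n * w m * w k * w l))"
      unfolding ieq using abs_sum4_le[of "{1..N}" "\<lambda>n m k l. g4 \<kappa> a y n m k l * J n m k l", OF tb]
      by (simp add: abs_mult)
    also have "\<dots> = (1/8) * A * (sum w {1..N})^4" by (simp add: sum4_prod)
    also have "\<dots> \<le> (1/8) * A * (8 * real N powr (1/8) * (1 + ln (real N)))^4"
    proof -
      have "A \<ge> 0" unfolding A_def using K0 T0 by simp
      moreover have "sum w {1..N} \<le> 8 * real N powr (1/8) * (1 + ln (real N))"
        unfolding w_def by (rule divisor_sum_bound[OF N1])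
      moreover have "0 \<le> sum w {1..N}" using w0 by (simp add: sum_nonneg)
      ultimately show ?thesis by (intro mult_left_mono power_mono) auto
    qed
    also have "\<dots> \<le> Cf * T powr (2 * real \<kappa> - 1 / 2 + \<epsilon>) * (T powr (3 / 4)) powr (1 / 2)"
    proof -
      have A0: "A \<ge> 0" unfolding A_def using K0 T0 by simp
      have "ln (real N) \<le> ln T" using N1 Ny yT by simp
      then have lnN: "1 + ln (real N) \<le> (1 + 4/\<epsilon>) * T powr (\<epsilon>/4)"
        using ln_bound[of T \<epsilon>] T \<epsilon> by simp
      have Np: "real N powr (1/8) \<le> y powr (1/8)" using Ny by (intro powr_mono2) auto
      have l0: "0 \<le> 1 + ln (real N)" using N1 by simp
      have "8 * real N powr (1/8) * (1 + ln (real N)) \<le> 8 * y powr (1/8) * ((1 + 4/\<epsilon>) * T powr (\<epsilon>/4))"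
        using Np lnN l0 by (intro mult_left_mono mult_mono) auto
      then have "(1/8) * A * (8 * real N powr (1/8) * (1 + ln (real N)))^4
          \<le> (1/8) * A * (8 * y powr (1/8) * ((1 + 4/\<epsilon>) * T powr (\<epsilon>/4)))^4"
        using A0 l0 by (intro mult_left_mono power_mono) auto
      also have "(8 * y powr (1/8) * ((1 + 4/\<epsilon>) * T powr (\<epsilon>/4)))^4
          = 8^4 * (y powr (1/8))^4 * (1 + 4/\<epsilon>)^4 * (T powr (\<epsilon>/4))^4"
        by (simp add: power_mult_distrib)
      also have "(y powr (1/8))^4 = y powr (1/2)" using y1 by (subst powr_power) auto
      also have "(T powr (\<epsilon>/4))^4 = T powr \<epsilon>" using T0 by (subst powr_power) auto
      also have "(1/8) * A * (8^4 * y powr (1/2) * (1 + 4/\<epsilon>)^4 * T powr \<epsilon>)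
          = Cf * (T^p * sqrt T * T powr \<epsilon>) * y powr (1/2)"
        unfolding A_def Cf_def by (simp add: field_simps)
      also have "T^p * sqrt T * T powr \<epsilon> = T powr (2 * real \<kappa> - 1 / 2 + \<epsilon>)"
      proof -
        have "T^p = T powr (real p)" using T0 by (simp add: powr_realpow)
        moreover have "sqrt T = T powr (1/2)" using T0 by (simp add: powr_half_sqrt)
        ultimately have "T^p * sqrt T * T powr \<epsilon> = T powr (real p) * T powr (1/2) * T powr \<epsilon>" by simp
        also have "\<dots> = T powr (2 * real \<kappa> - 1 / 2 + \<epsilon>)"
          unfolding rp powr_add[symmetric] by simp
        finally show ?thesis .
      qed
      finally show ?thesis unfolding y_def by simp
    qed
    finally show "\<bar>integral {T..2 * T} (S4 \<kappa> a T)\<bar> \<le> Cf * T powr (2 * real \<kappa> - 1 / 2 + \<epsilon>) * (T powr (3 / 4)) powr (1 / 2)" .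
  qed
qed

end
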